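(* Let $n$ be a positive integer for which Williamson type matrices of order $n$ exist. Then there exist four mutually quasi-unbiased Hadamard matrices for the parameters $(16n,16n,16,16n^2)$.
   Context: Williamson type matrices of order $n$ are four $n\times n$ $(1,-1)$-matrices $A,B,C,D$ such that $XY^\top=YX^\top$ for all $X,Y\in\{A,B,C,D\}$ and $AA^\top+BB^\top+CC^\top+DD^\top=4nI_n$. A Hadamard matrix of order $N$ is an $N\times N$ $(1,-1)$-matrix $H$ with $HH^\top=NI_N$; a weighing matrix of order $N$ and weight $k$ is an $N\times N$ $(0,1,-1)$-matrix $W$ with $WW^\top=kI_N$. Two weighing matrices (e.g. Hadamard matrices) $W_1,W_2$ of order $N$ and weight $k$ are quasi-unbiased for parameters $(N,k,l,a)$ if $\frac1{\sqrt a}W_1W_2^\top$ is a weighing matrix of order $N$ and weight $l$; mutually quasi-unbiased means pairwise. *)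

theory Defs
  imports "Jordan_Normal_Form.Matrix"
begin

definition pm1_mat :: "real mat \<Rightarrow> bool" where
  "pm1_mat A \<longleftrightarrow> (\<forall>i<dim_row A. \<forall>j<dim_col A. A $$ (i,j) = 1 \<or> A $$ (i,j) = -1)"

definition zpm1_mat :: "real mat \<Rightarrow> bool" where
  "zpm1_mat A \<longleftrightarrow> (\<forall>i<dim_row A. \<forall>j<dim_col A.
      A $$ (i,j) = 0 \<or> A $$ (i,j) = 1 \<or> A $$ (i,j) = -1)"

definition williamson_type :: "nat \<Rightarrow> real mat \<Rightarrow> real mat \<Rightarrow> real mat \<Rightarrow> real mat \<Rightarrow> bool" where
  "williamson_type n A B C D \<longleftrightarrow>
     (\<forall>X\<in>{A,B,C,D}. X \<in> carrier_mat n n \<and> pm1_mat X) \<and>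
     (\<forall>X\<in>{A,B,C,D}. \<forall>Y\<in>{A,B,C,D}. X * transpose_mat Y = Y * transpose_mat X) \<and>
     A * transpose_mat A + B * transpose_mat B + C * transpose_mat C + D * transpose_mat D
       = (4 * real n) \<cdot>\<^sub>m 1\<^sub>m n"

definition hadamard_mat :: "nat \<Rightarrow> real mat \<Rightarrow> bool" where
  "hadamard_mat N H \<longleftrightarrow> H \<in> carrier_mat N N \<and> pm1_mat H \<and>
     H * transpose_mat H = real N \<cdot>\<^sub>m 1\<^sub>m N"

definition weighing_mat :: "nat \<Rightarrow> nat \<Rightarrow> real mat \<Rightarrow> bool" where
  "weighing_mat N k W \<longleftrightarrow> W \<in> carrier_mat N N \<and> zpm1_mat W \<and>
     W * transpose_mat W = real k \<cdot>\<^sub>m 1\<^sub>m N"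

definition quasi_unbiased :: "nat \<Rightarrow> nat \<Rightarrow> nat \<Rightarrow> real \<Rightarrow> real mat \<Rightarrow> real mat \<Rightarrow> bool" where
  "quasi_unbiased N k l a W1 W2 \<longleftrightarrow> weighing_mat N k W1 \<and> weighing_mat N k W2 \<and>
     weighing_mat N l ((1 / sqrt a) \<cdot>\<^sub>m (W1 * transpose_mat W2))"

definition mutually_quasi_unbiased :: "nat \<Rightarrow> nat \<Rightarrow> nat \<Rightarrow> real \<Rightarrow> nat set \<Rightarrow> (nat \<Rightarrow> real mat) \<Rightarrow> bool" where
  "mutually_quasi_unbiased N k l a I W \<longleftrightarrow>
     (\<forall>i\<in>I. \<forall>j\<in>I. i \<noteq> j \<longrightarrow> quasi_unbiased N k l a (W i) (W j))"

end

theory Submission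
  imports Defs "Jordan_Normal_Form.Determinant"
begin


lemma all4: "(\<forall>x<(4::nat). P x) \<longleftrightarrow> P 0 \<and> P 1 \<and> P 2 \<and> P 3"
  by (auto simp: less_Suc_eq numeral_eq_Suc)
lemma sum4: "(\<Sum>q\<in>{0..<4::nat}. g q) = g 0 + g 1 + g 2 + g (3::nat)"
  by (simp add: numeral_eq_Suc)

lemma sum_split: fixes a m :: nat shows "(\<Sum>c\<in>{0..<a*m}. g c) = (\<Sum>b\<in>{0..<a}. \<Sum>p\<in>{0..<m}. (g (b*m+p) :: real))"
proof (induction a)
  case 0 then show ?case by simp
next
  case (Suc a)
  have "(\<Sum>c\<in>{0..<Suc a*m}. g c) = (\<Sum>c\<in>{0..<a*m}. g c) + (\<Sum>c\<in>{a*m..<a*m+m}. g c)"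
    by (subst sum.atLeastLessThan_concat) (auto simp: algebra_simps)
  also have "(\<Sum>c\<in>{a*m..<a*m+m}. g c) = (\<Sum>p\<in>{0..<m}. g (a*m+p))"
    using sum.shift_bounds_nat_ivl[of g 0 "a*m" m] by (simp add: add.commute)
  finally show ?case using Suc by simp
qed

lemma divmod_eq: "k < (n::nat) \<Longrightarrow> k' < n \<Longrightarrow> (x*n+k = y*n+k') \<longleftrightarrow> (x = y \<and> k = k')"
proof
  assume a: "k<n" "k'<n" "x*n+k = y*n+k'"
  have "x = (x*n+k) div n" "y = (y*n+k') div n" "k = (x*n+k) mod n" "k' = (y*n+k') mod n" using a(1,2) by simp_all
  then show "x = y \<and> k = k'" using a(3) by metis
qed auto

definition wsel :: "'a \<Rightarrow> 'a \<Rightarrow> 'a \<Rightarrow> 'a \<Rightarrow> nat \<Rightarrow> nat \<Rightarrow> 'a" where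
  "wsel A B C D p q = [[A,B,C,D],[B,A,D,C],[C,D,A,B],[D,C,B,A]] ! p ! q"
definition wsg :: "nat \<Rightarrow> nat \<Rightarrow> real" where
  "wsg p q = [[1,1,1,1],[-1,1,-1,1],[-1,1,1,-1],[-1,-1,1,1]] ! p ! q"
definition WG :: "nat \<Rightarrow> real mat \<Rightarrow> real mat \<Rightarrow> real mat \<Rightarrow> real mat \<Rightarrow> real mat" where
  "WG n A B C D = mat (4*n) (4*n) (\<lambda>(r,c). wsg (r div n) (c div n) * wsel A B C D (r div n) (c div n) $$ (r mod n, c mod n))"

lemma wsel_in: "p<4 \<Longrightarrow> q<4 \<Longrightarrow> wsel A B C D p q \<in> {A,B,C,D}"
  unfolding all4[of "\<lambda>p. p<4 \<longrightarrow> _ p", simplified] by (auto simp: wsel_def less_Suc_eq numeral_eq_Suc)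

lemma wsg_pm: "p<4 \<Longrightarrow> q<4 \<Longrightarrow> wsg p q = 1 \<or> wsg p q = -1"
  by (auto simp: wsg_def less_Suc_eq numeral_eq_Suc)

lemma wcomb:
  fixes e :: "'a \<Rightarrow> 'a \<Rightarrow> real"
  assumes "e A B = e B A" "e A C = e C A" "e A D = e D A" "e B C = e C B" "e B D = e D B" "e C D = e D C"
  shows "\<forall>p<4. \<forall>p'<4. (\<Sum>q\<in>{0..<4}. wsg p q * wsg p' q * e (wsel A B C D p q) (wsel A B C D p' q))
     = (if p = p' then e A A + e B B + e C C + e D D else 0)"
  unfolding all4 sum4 using assms by (simp add: wsel_def wsg_def)

lemma gram_entry:
  assumes "X \<in> carrier_mat n m" "Y \<in> carrier_mat n m" "a < n" "b < n"
  shows "(X * transpose_mat Y) $$ (a,b) = (\<Sum>i\<in>{0..<m}. X $$ (a,i) * Y $$ (b,i))"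
  using assms by (simp add: scalar_prod_def)

lemma williamson_hadamard:
  assumes W: "williamson_type n A B C D"
  shows "hadamard_mat (4*n) (WG n A B C D)"
proof -
  have car: "X \<in> carrier_mat n n" and pm: "pm1_mat X" if "X \<in> {A,B,C,D}" for X
    using W that unfolding williamson_type_def by blast+
  have sym: "X * transpose_mat Y = Y * transpose_mat X" if "X \<in> {A,B,C,D}" "Y \<in> {A,B,C,D}" for X Y
    using W that unfolding williamson_type_def by blast
  have sumsq: "A * transpose_mat A + B * transpose_mat B + C * transpose_mat C + D * transpose_mat D
       = (4 * real n) \<cdot>\<^sub>m 1\<^sub>m n" using W unfolding williamson_type_def by blast
  let ?G = "WG n A B C D"
  have Gc: "?G \<in> carrier_mat (4*n) (4*n)" by (simp add: WG_def)
  have Gidx: "?G $$ (r,c) = wsg (r div n) (c div n) * wsel A B C D (r div n) (c div n) $$ (r mod n, c mod n)"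
    if "r < 4*n" "c < 4*n" for r c using that by (simp add: WG_def)
  have pmG: "pm1_mat ?G"
    unfolding pm1_mat_def
  proof (intro allI impI)
    fix r c assume rc: "r < dim_row ?G" "c < dim_col ?G"
    then have rc': "r < 4*n" "c < 4*n" by (auto simp: WG_def)
    then have n: "n > 0" by auto
    have "r div n < 4" "c div n < 4" using rc' by (auto simp: div_less_iff_less_mult mult.commute)
    then have X: "wsel A B C D (r div n) (c div n) \<in> {A,B,C,D}" by (rule wsel_in)
    have "r mod n < n" "c mod n < n" using n by auto
    then have e: "wsel A B C D (r div n) (c div n) $$ (r mod n, c mod n) = 1 \<or> wsel A B C D (r div n) (c div n) $$ (r mod n, c mod n) = -1"
      using car[OF X] pm[OF X] unfolding pm1_mat_def by auto
    have s: "wsg (r div n) (c div n) = 1 \<or> wsg (r div n) (c div n) = -1"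
      using wsg_pm \<open>r div n < 4\<close> \<open>c div n < 4\<close> by blast
    show "?G $$ (r,c) = 1 \<or> ?G $$ (r,c) = -1" using Gidx[OF rc'] e s by auto
  qed
  have prod: "?G * transpose_mat ?G = real (4*n) \<cdot>\<^sub>m 1\<^sub>m (4*n)"
  proof (rule eq_matI)
    fix r r' assume "r < dim_row (real (4*n) \<cdot>\<^sub>m 1\<^sub>m (4*n))" "r' < dim_col (real (4*n) \<cdot>\<^sub>m 1\<^sub>m (4*n))"
    then have rr: "r < 4*n" "r' < 4*n" by auto
    then have n: "n > 0" by auto
    define p where "p = r div n"
    define p' where "p' = r' div n"
    define a where "a = r mod n"
    define a' where "a' = r' mod n"
    have pl: "p < 4" "p' < 4" using rr by (auto simp: p_def p'_def div_less_iff_less_mult mult.commute)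
    have al: "a < n" "a' < n" using n by (auto simp: a_def a'_def)
    define e :: "real mat \<Rightarrow> real mat \<Rightarrow> real" where "e = (\<lambda>X Y. (X * transpose_mat Y) $$ (a,a'))"
    have esym: "e X Y = e Y X" if "X \<in> {A,B,C,D}" "Y \<in> {A,B,C,D}" for X Y
      unfolding e_def using sym[OF that] by simp
    have "(?G * transpose_mat ?G) $$ (r,r') = (\<Sum>c\<in>{0..<4*n}. ?G $$ (r,c) * ?G $$ (r',c))"
      using gram_entry[OF Gc Gc rr] .
    also have "\<dots> = (\<Sum>q\<in>{0..<4}. \<Sum>m\<in>{0..<n}. ?G $$ (r,q*n+m) * ?G $$ (r',q*n+m))"
      by (rule sum_split)
    also have "\<dots> = (\<Sum>q\<in>{0..<4}. wsg p q * wsg p' q * e (wsel A B C D p q) (wsel A B C D p' q))"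
    proof (rule sum.cong[OF refl])
      fix q assume "q \<in> {0..<4::nat}"
      then have q: "q < 4" by simp
      have Xc: "wsel A B C D p q \<in> carrier_mat n n" "wsel A B C D p' q \<in> carrier_mat n n"
        using car[OF wsel_in[OF pl(1) q]] car[OF wsel_in[OF pl(2) q]] by auto
      have "(\<Sum>m\<in>{0..<n}. ?G $$ (r,q*n+m) * ?G $$ (r',q*n+m))
          = (\<Sum>m\<in>{0..<n}. wsg p q * wsg p' q * (wsel A B C D p q $$ (a,m) * wsel A B C D p' q $$ (a',m)))"
      proof (rule sum.cong[OF refl])
        fix m assume "m \<in> {0..<n}"
        then have m: "m < n" by simp
        have "q*n+m < (q+1)*n" using m by simp
        also have "(q+1)*n \<le> 4*n" using q by (intro mult_right_mono) auto
        finally have cl: "q*n+m < 4*n" .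
        have "(q*n+m) div n = q" "(q*n+m) mod n = m" using m by auto
        then show "?G $$ (r,q*n+m) * ?G $$ (r',q*n+m) = wsg p q * wsg p' q * (wsel A B C D p q $$ (a,m) * wsel A B C D p' q $$ (a',m))"
          using Gidx[OF rr(1) cl] Gidx[OF rr(2) cl] by (simp add: p_def p'_def a_def a'_def)
      qed
      also have "\<dots> = wsg p q * wsg p' q * e (wsel A B C D p q) (wsel A B C D p' q)"
        unfolding e_def gram_entry[OF Xc al] by (simp add: sum_distrib_left)
      finally show "(\<Sum>m\<in>{0..<n}. ?G $$ (r,q*n+m) * ?G $$ (r',q*n+m)) = wsg p q * wsg p' q * e (wsel A B C D p q) (wsel A B C D p' q)" .
    qed
    also have "\<dots> = (if p = p' then e A A + e B B + e C C + e D D else 0)"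
    proof -
      have ws: "\<forall>p<4. \<forall>p'<4. (\<Sum>q\<in>{0..<4}. wsg p q * wsg p' q * e (wsel A B C D p q) (wsel A B C D p' q))
         = (if p = p' then e A A + e B B + e C C + e D D else 0)"
        by (rule wcomb) (rule esym; simp)+
      then show ?thesis using pl by blast
    qed
    also have "e A A + e B B + e C C + e D D = 4 * real n * (if a = a' then 1 else 0)"
    proof -
      have Ac: "A \<in> carrier_mat n n" "B \<in> carrier_mat n n" "C \<in> carrier_mat n n" "D \<in> carrier_mat n n"
        using car by auto
      have "(A * transpose_mat A + B * transpose_mat B + C * transpose_mat C + D * transpose_mat D) $$ (a,a')
          = e A A + e B B + e C C + e D D" unfolding e_def using Ac al by simp
      then show ?thesis using sumsq al by simp
    qed
    also have "(if p = p' then 4 * real n * (if a = a' then 1 else 0) else 0) = (real (4*n) \<cdot>\<^sub>m 1\<^sub>m (4*n)) $$ (r,r')"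
    proof -
      have "r = p*n+a" "r' = p'*n+a'" by (simp_all add: p_def a_def p'_def a'_def)
      then have "(r = r') = (p = p' \<and> a = a')" using divmod_eq[OF al] by simp
      then show ?thesis using rr by auto
    qed
    finally show "(?G * transpose_mat ?G) $$ (r,r') = (real (4*n) \<cdot>\<^sub>m 1\<^sub>m (4*n)) $$ (r,r')" .
  qed (auto simp: WG_def)
  show ?thesis unfolding hadamard_mat_def using Gc pmG prod by blast
qed



lemma transpose_smult: "transpose_mat (c \<cdot>\<^sub>m A) = c \<cdot>\<^sub>m transpose_mat (A :: real mat)"
  by (rule eq_matI) auto
lemma smult_smult_mat: "a \<cdot>\<^sub>m (b \<cdot>\<^sub>m A) = (a*b) \<cdot>\<^sub>m (A :: real mat)"
  by (rule eq_matI) auto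

lemma one_smult_mat': "1 \<cdot>\<^sub>m A = (A :: real mat)"
  by (rule eq_matI) auto

lemma qu_prod:
  fixes H1 H2 :: "real mat"
  assumes h1: "hadamard_mat N H1" and h2: "hadamard_mat N H2" and N: "N > 0"
  shows "(c \<cdot>\<^sub>m (H1 * transpose_mat H2)) * transpose_mat (c \<cdot>\<^sub>m (H1 * transpose_mat H2))
     = (c*c*real N*real N) \<cdot>\<^sub>m 1\<^sub>m N"
proof -
  from h1 have c1: "H1 \<in> carrier_mat N N" and p1: "H1 * transpose_mat H1 = real N \<cdot>\<^sub>m 1\<^sub>m N"
    unfolding hadamard_mat_def by auto
  from h2 have c2: "H2 \<in> carrier_mat N N" and p2: "H2 * transpose_mat H2 = real N \<cdot>\<^sub>m 1\<^sub>m N"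
    unfolding hadamard_mat_def by auto
  have t1: "transpose_mat H1 \<in> carrier_mat N N" and t2: "transpose_mat H2 \<in> carrier_mat N N"
    using c1 c2 by auto
  have inv: "transpose_mat H2 * H2 = real N \<cdot>\<^sub>m 1\<^sub>m N"
  proof -
    have "H2 * ((1/real N) \<cdot>\<^sub>m transpose_mat H2) = (1/real N) \<cdot>\<^sub>m (H2 * transpose_mat H2)"
      by (rule mult_smult_distrib[OF c2 t2])
    also have "\<dots> = 1\<^sub>m N" using p2 N by (simp add: smult_smult_mat one_smult_mat')
    finally have "((1/real N) \<cdot>\<^sub>m transpose_mat H2) * H2 = 1\<^sub>m N"
      by (rule mat_mult_left_right_inverse[OF c2 smult_carrier_mat[OF t2]])
    then have "(1/real N) \<cdot>\<^sub>m (transpose_mat H2 * H2) = 1\<^sub>m N"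
      using mult_smult_assoc_mat[OF t2 c2] by simp
    then have "real N \<cdot>\<^sub>m ((1/real N) \<cdot>\<^sub>m (transpose_mat H2 * H2)) = real N \<cdot>\<^sub>m 1\<^sub>m N" by simp
    then show ?thesis using N by (simp add: smult_smult_mat one_smult_mat')
  qed
  have tr: "transpose_mat (c \<cdot>\<^sub>m (H1 * transpose_mat H2)) = c \<cdot>\<^sub>m (H2 * transpose_mat H1)"
    using transpose_mult[OF c1 t2] by (simp add: transpose_smult)
  have "(H1 * transpose_mat H2) * (H2 * transpose_mat H1) = H1 * ((transpose_mat H2 * H2) * transpose_mat H1)"
    using assoc_mult_mat[OF c1 t2 mult_carrier_mat[OF c2 t1]] assoc_mult_mat[OF t2 c2 t1] by simp
  also have "\<dots> = H1 * (real N \<cdot>\<^sub>m transpose_mat H1)"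
    unfolding inv using mult_smult_assoc_mat[OF one_carrier_mat t1] t1 by simp
  also have "\<dots> = real N \<cdot>\<^sub>m (real N \<cdot>\<^sub>m 1\<^sub>m N)"
    using mult_smult_distrib[OF c1 t1] p1 by simp
  finally have pp: "(H1 * transpose_mat H2) * (H2 * transpose_mat H1) = (real N * real N) \<cdot>\<^sub>m 1\<^sub>m N"
    by (simp add: smult_smult_mat)
  have m1: "H1 * transpose_mat H2 \<in> carrier_mat N N" "H2 * transpose_mat H1 \<in> carrier_mat N N"
    using c1 c2 t1 t2 by auto
  show ?thesis unfolding tr
    using mult_smult_assoc_mat[OF m1(1) smult_carrier_mat[OF m1(2)]] mult_smult_distrib[OF m1(1) m1(2)] pp
    by (simp add: smult_smult_mat mult.assoc)
qed



definition gmul :: "nat\<Rightarrow>nat\<Rightarrow>nat" where "gmul i b = [[0,0,0,0],[0,1,2,3],[0,2,3,1],[0,3,1,2]] ! i ! b"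
definition gadd :: "nat\<Rightarrow>nat\<Rightarrow>nat" where "gadd x y = [[0,1,2,3],[1,0,3,2],[2,3,0,1],[3,2,1,0]] ! x ! y"
definition fi :: "nat\<Rightarrow>nat\<Rightarrow>nat\<Rightarrow>nat" where "fi i b t = gadd (gmul i b) t"
lemma fi_lt': "\<forall>i<4. \<forall>b<4. \<forall>t<4. fi i b t < 4"
  unfolding all4 by (simp add: fi_def gmul_def gadd_def)
lemma fi_inj': "\<forall>i<4. \<forall>b<4. \<forall>t<4. \<forall>t'<4. fi i b t = fi i b t' \<longrightarrow> t = t'"
  unfolding all4 by (simp add: fi_def gmul_def gadd_def)
lemma fi_eq': "\<forall>i<4. \<forall>j<4. \<forall>b<4. \<forall>t<4. \<forall>t'<4. fi i b t = fi j b t' \<longleftrightarrow> gmul (gadd i j) b = gadd t t'"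
  unfolding all4 by (simp add: fi_def gmul_def gadd_def)
lemma gmul_inj': "\<forall>d<4. \<forall>b<4. \<forall>b'<4. d \<noteq> 0 \<longrightarrow> gmul d b = gmul d b' \<longrightarrow> b = b'"
  unfolding all4 by (simp add: gmul_def)
lemma gadd_nz': "\<forall>i<4. \<forall>j<4. i \<noteq> j \<longrightarrow> gadd i j \<noteq> 0 \<and> gadd i j < 4"
  unfolding all4 by (simp add: gadd_def)
lemma fi_uniq: "i<4 \<Longrightarrow> j<4 \<Longrightarrow> i \<noteq> j \<Longrightarrow> b<4 \<Longrightarrow> b'<4 \<Longrightarrow> t<4 \<Longrightarrow> t'<4 \<Longrightarrow>
   fi i b t = fi j b t' \<Longrightarrow> fi i b' t = fi j b' t' \<Longrightarrow> b = b'"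
proof -
  assume a: "i<4" "j<4" "i \<noteq> j" "b<4" "b'<4" "t<4" "t'<4" "fi i b t = fi j b t'" "fi i b' t = fi j b' t'"
  have e1: "gmul (gadd i j) b = gadd t t'" using fi_eq' a by blast
  have e2: "gmul (gadd i j) b' = gadd t t'" using fi_eq' a by blast
  have d: "gadd i j \<noteq> 0" "gadd i j < 4" using gadd_nz' a by blast+
  show "b = b'" using gmul_inj' d a(4,5) e1 e2 by metis
qed

definition U4 :: "nat \<Rightarrow> nat \<Rightarrow> real" where
  "U4 h b = [[1,1,1,1],[1,-1,1,-1],[1,1,-1,-1],[1,-1,-1,1]] ! h ! b"
lemma U4_orth': "\<forall>h<4. \<forall>h'<4. (\<Sum>b\<in>{0..<4}. U4 h b * U4 h' b) = (if h = h' then 4 else 0)"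
  unfolding all4 sum4 by (simp add: U4_def)
lemma U4_pm': "\<forall>h<4. \<forall>b<4. U4 h b = 1 \<or> U4 h b = -1"
  unfolding all4 by (simp add: U4_def)

lemma sum_onehot:
  fixes u :: "nat \<Rightarrow> real"
  assumes u: "\<forall>b<4. u b = 1 \<or> u b = -1" and P: "\<forall>b<4. \<forall>b'<4. P b \<longrightarrow> P b' \<longrightarrow> b = b'"
  shows "(\<Sum>b\<in>{0..<4}. u b * (if P b then 1 else 0)) \<in> {0,1,-1}"
proof (cases "\<exists>b<4. P b")
  case True
  then obtain b0 where b0: "b0 < 4" "P b0" by blast
  have "(\<Sum>b\<in>{0..<4}. u b * (if P b then 1 else 0)) = u b0 * (if P b0 then 1 else 0)
      + (\<Sum>b\<in>{0..<4}-{b0}. u b * (if P b then 1 else 0))"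
    by (rule sum.remove) (use b0 in auto)
  also have "(\<Sum>b\<in>{0..<4}-{b0}. u b * (if P b then 1 else 0)) = 0"
    by (rule sum.neutral) (use P b0 in auto)
  finally show ?thesis using u b0 by auto
next
  case False
  then have "(\<Sum>b\<in>{0..<4}. u b * (if P b then 1 else 0)) = 0" by (intro sum.neutral) auto
  then show ?thesis by simp
qed

definition HH :: "real mat \<Rightarrow> nat \<Rightarrow> nat \<Rightarrow> real mat" where
  "HH G n i = mat (16*n) (16*n) (\<lambda>(r,c). U4 (r div (4*n)) (c div (4*n)) *
      G $$ (fi i (c div (4*n)) ((r div n) mod 4) * n + r mod n, c mod (4*n)))"

lemma idx_lt: "f < 4 \<Longrightarrow> k < (n::nat) \<Longrightarrow> f*n+k < 4*n"
proof -
  assume a: "f<4" "k<n"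
  have "f*n+k < (f+1)*n" using a by simp
  also have "(f+1)*n \<le> 4*n" using a by (intro mult_right_mono) auto
  finally show ?thesis .
qed

lemma r_lt4: "r < 16*(n::nat) \<Longrightarrow> r div (4*n) < 4"
  by (simp add: div_less_iff_less_mult mult.commute)

lemma HH_entry:
  assumes G: "hadamard_mat (4*n) G" and ij: "i < 4" "j < 4" and rr: "r < 16*n" "r' < 16*n"
  shows "(HH G n i * transpose_mat (HH G n j)) $$ (r,r') = 4 * real n *
     (\<Sum>b\<in>{0..<4}. U4 (r div (4*n)) b * U4 (r' div (4*n)) b *
        (if fi i b ((r div n) mod 4) = fi j b ((r' div n) mod 4) \<and> r mod n = r' mod n then 1 else 0))"
proof -
  have n: "n > 0" using rr by auto
  have Gc: "G \<in> carrier_mat (4*n) (4*n)" and Gp: "G * transpose_mat G = real (4*n) \<cdot>\<^sub>m 1\<^sub>m (4*n)"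
    using G unfolding hadamard_mat_def by auto
  define h where "h = r div (4*n)"
  define h' where "h' = r' div (4*n)"
  define t where "t = (r div n) mod 4"
  define t' where "t' = (r' div n) mod 4"
  define k where "k = r mod n"
  define k' where "k' = r' mod n"
  have tl: "t < 4" "t' < 4" by (auto simp: t_def t'_def)
  have kl: "k < n" "k' < n" using n by (auto simp: k_def k'_def)
  have Hc: "HH G n x \<in> carrier_mat (16*n) (16*n)" for x by (simp add: HH_def)
  have Hidx: "HH G n x $$ (r,c) = U4 (r div (4*n)) (c div (4*n)) *
      G $$ (fi x (c div (4*n)) ((r div n) mod 4) * n + r mod n, c mod (4*n))"
    if "r < 16*n" "c < 16*n" for x r c using that by (simp add: HH_def)
  have "(HH G n i * transpose_mat (HH G n j)) $$ (r,r') = (\<Sum>c\<in>{0..<16*n}. HH G n i $$ (r,c) * HH G n j $$ (r',c))"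
    using gram_entry[OF Hc Hc rr] .
  also have "\<dots> = (\<Sum>c\<in>{0..<4*(4*n)}. HH G n i $$ (r,c) * HH G n j $$ (r',c))" by simp
  also have "\<dots> = (\<Sum>b\<in>{0..<4}. \<Sum>p\<in>{0..<4*n}. HH G n i $$ (r,b*(4*n)+p) * HH G n j $$ (r',b*(4*n)+p))"
    by (rule sum_split)
  also have "\<dots> = (\<Sum>b\<in>{0..<4}. 4 * real n * (U4 h b * U4 h' b *
        (if fi i b t = fi j b t' \<and> k = k' then 1 else 0)))"
  proof (rule sum.cong[OF refl])
    fix b assume "b \<in> {0..<4::nat}"
    then have b: "b < 4" by simp
    define \<rho> where "\<rho> = fi i b t * n + k"
    define \<rho>' where "\<rho>' = fi j b t' * n + k'"
    have fl: "fi i b t < 4" "fi j b t' < 4" using fi_lt' ij b tl by blast+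
    have rl: "\<rho> < 4*n" "\<rho>' < 4*n" unfolding \<rho>_def \<rho>'_def using idx_lt fl kl by auto
    have "(\<Sum>p\<in>{0..<4*n}. HH G n i $$ (r,b*(4*n)+p) * HH G n j $$ (r',b*(4*n)+p))
       = (\<Sum>p\<in>{0..<4*n}. U4 h b * U4 h' b * (G $$ (\<rho>,p) * G $$ (\<rho>',p)))"
    proof (rule sum.cong[OF refl])
      fix p assume "p \<in> {0..<4*n}"
      then have p: "p < 4*n" by simp
      have cl: "b*(4*n)+p < 16*n" using idx_lt[OF b p] by (simp add: mult.commute mult.left_commute)
      have "(b*(4*n)+p) div (4*n) = b" "(b*(4*n)+p) mod (4*n) = p" using p by auto
      then show "HH G n i $$ (r,b*(4*n)+p) * HH G n j $$ (r',b*(4*n)+p) = U4 h b * U4 h' b * (G $$ (\<rho>,p) * G $$ (\<rho>',p))"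
        using Hidx[OF rr(1) cl] Hidx[OF rr(2) cl]
        by (simp add: h_def h'_def t_def t'_def k_def k'_def \<rho>_def \<rho>'_def)
    qed
    also have "\<dots> = U4 h b * U4 h' b * (G * transpose_mat G) $$ (\<rho>,\<rho>')"
      unfolding gram_entry[OF Gc Gc rl] by (simp add: sum_distrib_left)
    also have "\<dots> = 4 * real n * (U4 h b * U4 h' b * (if fi i b t = fi j b t' \<and> k = k' then 1 else 0))"
      unfolding Gp using rl divmod_eq[OF kl] by (simp add: \<rho>_def \<rho>'_def)
    finally show "(\<Sum>p\<in>{0..<4*n}. HH G n i $$ (r,b*(4*n)+p) * HH G n j $$ (r',b*(4*n)+p)) =
       4 * real n * (U4 h b * U4 h' b * (if fi i b t = fi j b t' \<and> k = k' then 1 else 0))" .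
  qed
  also have "\<dots> = 4 * real n * (\<Sum>b\<in>{0..<4}. U4 h b * U4 h' b * (if fi i b t = fi j b t' \<and> k = k' then 1 else 0))"
    by (simp add: sum_distrib_left)
  finally show ?thesis by (simp add: h_def h'_def t_def t'_def k_def k'_def)
qed

lemma r_decomp: "(r::nat) = (r div (4*n))*(4*n) + ((r div n) mod 4)*n + r mod n"
proof -
  have a: "r div (4*n) = r div n div 4" by (simp add: div_mult2_eq mult.commute)
  have e1: "r = (r div n)*n + r mod n" by simp
  have e2: "r div n = (r div n div 4)*4 + (r div n) mod 4" by simp
  have e3: "(r div n)*n = (r div n div 4)*4*n + ((r div n) mod 4)*n" by (metis e2 add_mult_distrib)
  show ?thesis unfolding a by (metis (no_types) e1 e3 mult.assoc add.assoc)
qed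

lemma HH_pm: assumes G: "hadamard_mat (4*n) G" and i: "i < 4" shows "pm1_mat (HH G n i)"
  unfolding pm1_mat_def
proof (intro allI impI)
  fix r c assume rc: "r < dim_row (HH G n i)" "c < dim_col (HH G n i)"
  then have rc': "r < 16*n" "c < 16*n" by (auto simp: HH_def)
  then have n: "n > 0" by auto
  have Gc: "G \<in> carrier_mat (4*n) (4*n)" and Gp: "pm1_mat G" using G unfolding hadamard_mat_def by auto
  have l: "r div (4*n) < 4" "c div (4*n) < 4" using rc' r_lt4 by auto
  have tl: "(r div n) mod 4 < 4" by simp
  have fl: "fi i (c div (4*n)) ((r div n) mod 4) < 4" using fi_lt' i l tl by blast
  have rl: "fi i (c div (4*n)) ((r div n) mod 4) * n + r mod n < 4*n" using idx_lt[OF fl] n by simp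
  have cl: "c mod (4*n) < 4*n" using n by simp
  have g: "G $$ (fi i (c div (4*n)) ((r div n) mod 4) * n + r mod n, c mod (4*n)) = 1 \<or>
           G $$ (fi i (c div (4*n)) ((r div n) mod 4) * n + r mod n, c mod (4*n)) = -1"
    using Gp Gc rl cl unfolding pm1_mat_def by auto
  have u: "U4 (r div (4*n)) (c div (4*n)) = 1 \<or> U4 (r div (4*n)) (c div (4*n)) = -1"
    using U4_pm' l by blast
  show "HH G n i $$ (r,c) = 1 \<or> HH G n i $$ (r,c) = -1"
    using g u rc' by (auto simp: HH_def)
qed

lemma HH_had: assumes G: "hadamard_mat (4*n) G" and i: "i < 4" shows "hadamard_mat (16*n) (HH G n i)"
proof -
  have Hc: "HH G n i \<in> carrier_mat (16*n) (16*n)" by (simp add: HH_def)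
  have prod: "HH G n i * transpose_mat (HH G n i) = real (16*n) \<cdot>\<^sub>m 1\<^sub>m (16*n)"
  proof (rule eq_matI)
    fix r r' assume "r < dim_row (real (16*n) \<cdot>\<^sub>m 1\<^sub>m (16*n))" "r' < dim_col (real (16*n) \<cdot>\<^sub>m 1\<^sub>m (16*n))"
    then have rr: "r < 16*n" "r' < 16*n" by auto
    then have n: "n > 0" by auto
    define h where "h = r div (4*n)"
    define h' where "h' = r' div (4*n)"
    define t where "t = (r div n) mod 4"
    define t' where "t' = (r' div n) mod 4"
    define k where "k = r mod n"
    define k' where "k' = r' mod n"
    have hl: "h < 4" "h' < 4" using r_lt4 rr by (auto simp: h_def h'_def)
    have tl: "t < 4" "t' < 4" by (auto simp: t_def t'_def)
    have "(HH G n i * transpose_mat (HH G n i)) $$ (r,r') = 4 * real n *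
       (\<Sum>b\<in>{0..<4}. U4 h b * U4 h' b * (if fi i b t = fi i b t' \<and> k = k' then 1 else 0))"
      using HH_entry[OF G i i rr] by (simp add: h_def h'_def t_def t'_def k_def k'_def)
    also have "(\<Sum>b\<in>{0..<4}. U4 h b * U4 h' b * (if fi i b t = fi i b t' \<and> k = k' then 1 else 0))
       = (\<Sum>b\<in>{0..<4}. U4 h b * U4 h' b) * (if t = t' \<and> k = k' then 1 else 0)"
      unfolding sum_distrib_right
    proof (rule sum.cong[OF refl])
      fix b assume "b \<in> {0..<4::nat}"
      then have "b < 4" by simp
      then have "(fi i b t = fi i b t') = (t = t')" using fi_inj' i tl by blast
      then show "U4 h b * U4 h' b * (if fi i b t = fi i b t' \<and> k = k' then 1 else 0) =
          U4 h b * U4 h' b * (if t = t' \<and> k = k' then 1 else 0)" by simp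
    qed
    also have "(\<Sum>b\<in>{0..<4}. U4 h b * U4 h' b) = (if h = h' then 4 else 0)" using U4_orth' hl by blast
    also have "(r = r') = (h = h' \<and> t = t' \<and> k = k')"
    proof
      assume "h = h' \<and> t = t' \<and> k = k'"
      then show "r = r'" using r_decomp[of r n] r_decomp[of r' n] by (simp add: h_def h'_def t_def t'_def k_def k'_def)
    qed (simp add: h_def h'_def t_def t'_def k_def k'_def)
    then have "4 * real n * ((if h = h' then 4 else 0) * (if t = t' \<and> k = k' then 1 else 0))
       = (real (16*n) \<cdot>\<^sub>m 1\<^sub>m (16*n)) $$ (r,r')" using rr by auto
    finally show "(HH G n i * transpose_mat (HH G n i)) $$ (r,r') = (real (16*n) \<cdot>\<^sub>m 1\<^sub>m (16*n)) $$ (r,r')" .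
  qed (auto simp: HH_def)
  show ?thesis unfolding hadamard_mat_def using Hc HH_pm[OF G i] prod by blast
qed

theorem proposition4p11:
  fixes n :: nat
  assumes "n > 0"
    and "\<exists>A B C D. williamson_type n A B C D"
  shows "\<exists>H :: nat \<Rightarrow> real mat.
           (\<forall>i<4. hadamard_mat (16 * n) (H i)) \<and>
           mutually_quasi_unbiased (16 * n) (16 * n) 16 (16 * (real n)^2) {..<4} H"
proof -
  have n: "n > 0" by fact
  obtain A B C D where W: "williamson_type n A B C D" using assms(2) by blast
  define G where "G = WG n A B C D"
  have G: "hadamard_mat (4*n) G" using williamson_hadamard[OF W] by (simp add: G_def)
  define H where "H = HH G n"
  have had: "hadamard_mat (16*n) (H i)" if "i < 4" for i using HH_had[OF G that] by (simp add: H_def)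
  have wh: "weighing_mat (16*n) (16*n) (H i)" if "i < 4" for i
    using had[OF that] unfolding weighing_mat_def hadamard_mat_def zpm1_mat_def pm1_mat_def by auto
  have e16: "16 * (real n)^2 = (4 * real n)^2" by (simp add: power2_eq_square)
  have sq: "sqrt (16 * (real n)^2) = 4 * real n" unfolding e16 by (rule real_sqrt_abs[THEN trans]) simp
  have mq: "mutually_quasi_unbiased (16 * n) (16 * n) 16 (16 * (real n)^2) {..<4} H"
    unfolding mutually_quasi_unbiased_def quasi_unbiased_def
  proof (intro ballI impI conjI)
    fix i j assume ij: "i \<in> {..<4::nat}" "j \<in> {..<4::nat}" "i \<noteq> j"
    then have il: "i < 4" and jl: "j < 4" by auto
    show "weighing_mat (16*n) (16*n) (H i)" "weighing_mat (16*n) (16*n) (H j)" using wh il jl by auto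
    let ?W = "(1 / sqrt (16 * (real n)^2)) \<cdot>\<^sub>m (H i * transpose_mat (H j))"
    have Hc: "H x \<in> carrier_mat (16*n) (16*n)" for x by (simp add: H_def HH_def)
    have Wc: "?W \<in> carrier_mat (16*n) (16*n)"
      using smult_carrier_mat[OF mult_carrier_mat[OF Hc[of i] iffD2[OF transpose_carrier_mat Hc[of j]]]] .
    have Wz: "zpm1_mat ?W"
      unfolding zpm1_mat_def
    proof (intro allI impI)
      fix r r' assume "r < dim_row ?W" "r' < dim_col ?W"
      then have rr: "r < 16*n" "r' < 16*n" by (auto simp: H_def HH_def)
      define h where "h = r div (4*n)"
      define h' where "h' = r' div (4*n)"
      define t where "t = (r div n) mod 4"
      define t' where "t' = (r' div n) mod 4"
      define k where "k = r mod n"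
      define k' where "k' = r' mod n"
      have hl: "h < 4" "h' < 4" using r_lt4 rr by (auto simp: h_def h'_def)
      have tl: "t < 4" "t' < 4" by (auto simp: t_def t'_def)
      have "?W $$ (r,r') = (1 / (4 * real n)) * (H i * transpose_mat (H j)) $$ (r,r')"
        using rr sq by (simp add: H_def HH_def)
      also have "\<dots> = (\<Sum>b\<in>{0..<4}. U4 h b * U4 h' b * (if fi i b t = fi j b t' \<and> k = k' then 1 else 0))"
        using HH_entry[OF G il jl rr] n by (simp add: H_def h_def h'_def t_def t'_def k_def k'_def)
      also have "\<dots> \<in> {0,1,-1}"
      proof (rule sum_onehot)
        show "\<forall>b<4. U4 h b * U4 h' b = 1 \<or> U4 h b * U4 h' b = -1"
        proof (intro allI impI)
          fix b :: nat assume "b < 4"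
          then have "U4 h b = 1 \<or> U4 h b = -1" "U4 h' b = 1 \<or> U4 h' b = -1" using U4_pm' hl by blast+
          then show "U4 h b * U4 h' b = 1 \<or> U4 h b * U4 h' b = -1" by auto
        qed
        show "\<forall>b<4. \<forall>b'<4. fi i b t = fi j b t' \<and> k = k' \<longrightarrow> fi i b' t = fi j b' t' \<and> k = k' \<longrightarrow> b = b'"
          using fi_uniq[OF il jl ij(3) _ _ tl] by blast
      qed
      finally show "?W $$ (r,r') = 0 \<or> ?W $$ (r,r') = 1 \<or> ?W $$ (r,r') = -1" by auto
    qed
    have "?W * transpose_mat ?W = ((1 / sqrt (16 * (real n)^2)) * (1 / sqrt (16 * (real n)^2)) * real (16*n) * real (16*n)) \<cdot>\<^sub>m 1\<^sub>m (16*n)"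
      by (rule qu_prod[OF had[OF il] had[OF jl]]) (use n in simp)
    also have "(1 / sqrt (16 * (real n)^2)) * (1 / sqrt (16 * (real n)^2)) * real (16*n) * real (16*n) = real 16"
      unfolding sq using n by (simp add: field_simps)
    finally have Wp: "?W * transpose_mat ?W = real 16 \<cdot>\<^sub>m 1\<^sub>m (16*n)" .
    show "weighing_mat (16*n) 16 ?W" unfolding weighing_mat_def using Wc Wz Wp by blast
  qed
  show ?thesis using had mq by blast
qed


end
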